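(* Let $l<u$ be real, $D=[l,u]$, let $\Delta Q$ be real with $0<\Delta Q\le u-l$, and let $\epsilon\ge 0$ and $0\le\delta<1$. Let $b>0$ satisfy $$\epsilon-\log\Delta C(b)-\log(1-\delta)>0\quad\text{and}\quad b\ge \frac{\Delta Q}{\epsilon-\log\Delta C(b)-\log(1-\delta)}.$$ Then the bounded Laplace mechanism $\{W_q\mid q\in D\}$ with scale $b$ satisfies $(\epsilon,\delta)$-differential privacy, i.e. for every Borel set $A\subseteq\mathbb{R}$ and all $q,q'\in D$ with $|q-q'|\le\Delta Q$, $$\mathbb{P}(W_q\in A)\le e^{\epsilon}\,\mathbb{P}(W_{q'}\in A)+\delta.$$
   Context: For $b>0$ and $p\in D$, $C_p(b)=\int_l^u\frac{1}{2b}e^{-\frac{|x-p|}{b}}\,dx = 1-\frac12\left(e^{-\frac{p-l}{b}}+e^{-\frac{u-p}{b}}\right)$, and $\Delta C(b)=\frac{C_{l+\Delta Q}(b)}{C_l(b)}$. The bounded Laplace mechanism with scale $b$ is the family of real random variables $W_q$, $q\in D$, where $W_q$ has probability density $f_{W_q}(x)=\frac{1}{C_q(b)}\frac{1}{2b}e^{-\frac{|x-q|}{b}}$ for $x\in D$ and $f_{W_q}(x)=0$ for $x\notin D$. *)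

theory Defs
  imports "HOL-Probability.Probability"
begin

definition C_bl :: "real \<Rightarrow> real \<Rightarrow> real \<Rightarrow> real \<Rightarrow> real" where
  "C_bl l u b p = (LBINT x=l..u. 1 / (2*b) * exp (- \<bar>x - p\<bar> / b))"

definition DeltaC :: "real \<Rightarrow> real \<Rightarrow> real \<Rightarrow> real \<Rightarrow> real" where
  "DeltaC l u dQ b = C_bl l u b (l + dQ) / C_bl l u b l"

definition bl_density :: "real \<Rightarrow> real \<Rightarrow> real \<Rightarrow> real \<Rightarrow> real \<Rightarrow> real" where
  "bl_density l u b q x =
     (if x \<in> {l..u} then 1 / C_bl l u b q * (1 / (2*b)) * exp (- \<bar>x - q\<bar> / b) else 0)"

text \<open>Distribution of W_q: the measure on the reals with the above density.
  P(W_q \<in> A) is measure (bl_laplace l u b q) A.\<close>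
definition bl_laplace :: "real \<Rightarrow> real \<Rightarrow> real \<Rightarrow> real \<Rightarrow> real measure" where
  "bl_laplace l u b q = density lborel (\<lambda>x. ennreal (bl_density l u b q x))"

end

theory Submission
  imports Defs
begin

lemma C_closed:
  assumes b: "b>0" and lp: "l \<le> p" and pu: "p \<le> u"
  shows "C_bl l u b p = 1 - (exp (-(p-l)/b) + exp (-(u-p)/b))/2"
proof -
  let ?f = "\<lambda>x. 1/(2*b) * exp (- \<bar>x-p\<bar>/b)"
  have cont: "\<And>x. isCont ?f x" using b by (auto intro!: continuous_intros)
  have int: "interval_lebesgue_integrable lborel (ereal l) (ereal u) ?f"
    by (rule interval_integrable_isCont) (use cont in auto)
  have sum: "(LBINT x=ereal l..ereal p. ?f x) + (LBINT x=ereal p..ereal u. ?f x) = (LBINT x=ereal l..ereal u. ?f x)"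
    by (rule interval_integral_sum) (use int lp pu in \<open>simp add: min_def max_def\<close>)
  have 1: "(LBINT x=l..p. ?f x) = (LBINT x=l..p. 1/(2*b) * exp ((x-p)/b))"
    by (rule interval_integral_cong) (use lp pu in \<open>auto simp: einterval_iff\<close>)
  also have "\<dots> = exp((p-p)/b)/2 - exp((l-p)/b)/2"
    by (rule interval_integral_FTC_finite)
       (use b lp in \<open>auto intro!: continuous_intros derivative_eq_intros simp: has_real_derivative_iff_has_vector_derivative[symmetric]\<close>)
  finally have 1: "(LBINT x=l..p. ?f x) = 1/2 - exp((l-p)/b)/2" by simp
  have 2: "(LBINT x=p..u. ?f x) = (LBINT x=p..u. 1/(2*b) * exp (-(x-p)/b))"
    by (rule interval_integral_cong) (use lp pu in \<open>auto simp: einterval_iff\<close>)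
  also have "\<dots> = (- exp(-(u-p)/b)/2) - (- exp(-(p-p)/b)/2)"
    by (rule interval_integral_FTC_finite)
       (use b pu in \<open>auto intro!: continuous_intros derivative_eq_intros simp: has_real_derivative_iff_has_vector_derivative[symmetric]\<close>)
  finally have 2: "(LBINT x=p..u. ?f x) = 1/2 - exp(-(u-p)/b)/2" by simp
  show ?thesis unfolding C_bl_def using sum 1 2
    by (simp add: field_simps)
qed


definition Cf :: "real \<Rightarrow> real \<Rightarrow> real \<Rightarrow> real \<Rightarrow> real" where
  "Cf l u b p = 1 - (exp (-(p-l)/b) + exp (-(u-p)/b))/2"
definition Cd :: "real \<Rightarrow> real \<Rightarrow> real \<Rightarrow> real \<Rightarrow> real" where
  "Cd l u b p = (exp (-(p-l)/b) - exp (-(u-p)/b))/(2*b)"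

lemma Cf_deriv:
  assumes "b > 0"
  shows "DERIV (\<lambda>t. Cf l u b (t+d)) t :> Cd l u b (t+d)"
  unfolding Cf_def Cd_def using assms
  by (auto intro!: derivative_eq_intros simp: field_simps)

lemma Cf_pos:
  assumes "b>0" "l<u" "l \<le> p" "p \<le> u"
  shows "Cf l u b p > 0"
proof -
  have 1: "exp (-(p-l)/b) \<le> 1" "exp (-(u-p)/b) \<le> 1" using assms by (auto simp: divide_nonpos_pos)
  have "exp (-(p-l)/b) < 1 \<or> exp (-(u-p)/b) < 1"
  proof (cases "p = l")
    case True then show ?thesis using assms by (auto simp: divide_neg_pos)
  next
    case False then show ?thesis using assms by (auto simp: divide_neg_pos)
  qed
  moreover have "\<And>X Y::real. X \<le> 1 \<Longrightarrow> Y \<le> 1 \<Longrightarrow> X < 1 \<or> Y < 1 \<Longrightarrow> 0 < 1 - (X+Y)/2" by auto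
  ultimately show ?thesis using 1 unfolding Cf_def by blast
qed

lemma Cf_sym: "Cf l u b (l+u-p) = Cf l u b p"
  unfolding Cf_def by (simp add: algebra_simps)

lemma Phi1_mono:
  assumes b: "b>0" and "s \<le> t" "t \<le> u"
  shows "Cf l u b s * exp (s/b) \<le> Cf l u b t * exp (t/b)"
proof (rule DERIV_nonneg_imp_nondecreasing[OF assms(2)])
  fix x assume x: "s \<le> x" "x \<le> t"
  have d: "DERIV (\<lambda>x. Cf l u b (x+0) * exp (x/b)) x :> Cd l u b (x+0) * exp (x/b) + (exp (x/b) * (1/b)) * Cf l u b (x+0)"
    by (intro DERIV_mult Cf_deriv b) (use b in \<open>auto intro!: derivative_eq_intros\<close>)
  have "Cd l u b x + Cf l u b x / b = (1 - exp (-(u-x)/b))/b"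
    unfolding Cd_def Cf_def using b by (simp add: field_simps)
  moreover have "exp (-(u-x)/b) \<le> 1" using x assms by (auto simp: divide_nonpos_pos)
  ultimately have "Cd l u b x + Cf l u b x / b \<ge> 0" using b by simp
  then have "(Cd l u b x + Cf l u b x / b) * exp (x/b) \<ge> 0" by simp
  then have "Cd l u b (x+0) * exp (x/b) + (exp (x/b) * (1/b)) * Cf l u b (x+0) \<ge> 0"
    by (simp add: algebra_simps)
  with d show "\<exists>y. DERIV (\<lambda>x. Cf l u b x * exp (x/b)) x :> y \<and> 0 \<le> y" by auto
qed

lemma alg1: "(a2-c2)*(2-a1-c1) - (2-a2-c2)*(a1-c1) = -2*((a1-a2)*(1-c2)+(c2-c1)*(1-(a2::real)))"
  by algebra

lemma F_mono:
  assumes b: "b>0" and lu: "l<u" and d: "0 \<le> d" and "l \<le> s" "s \<le> t" "t + d \<le> u"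
  shows "Cf l u b (t+d) / Cf l u b (t+0) \<le> Cf l u b (s+d) / Cf l u b (s+0)"
proof (rule DERIV_nonpos_imp_nonincreasing[OF assms(5), where f = "\<lambda>x. Cf l u b (x+d) / Cf l u b (x+0)"])
  fix x assume x: "s \<le> x" "x \<le> t"
  have pos: "Cf l u b (x+0) > 0" using Cf_pos[of b l u x] assms x by auto
  have dv: "DERIV (\<lambda>x. Cf l u b (x+d) / Cf l u b (x+0)) x :>
     (Cd l u b (x+d) * Cf l u b (x+0) - Cf l u b (x+d) * Cd l u b (x+0)) / (Cf l u b (x+0) * Cf l u b (x+0))"
    by (intro DERIV_divide Cf_deriv b) (use pos in auto)
  define a1 where "a1 = exp (-(x-l)/b)"
  define c1 where "c1 = exp (-(u-x)/b)"
  define a2 where "a2 = exp (-(x+d-l)/b)"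
  define c2 where "c2 = exp (-(u-(x+d))/b)"
  have e: "Cd l u b (x+d) * Cf l u b (x+0) - Cf l u b (x+d) * Cd l u b (x+0)
      = ((a2-c2)*(2-a1-c1) - (2-a2-c2)*(a1-c1)) / (4*b)"
    unfolding Cd_def Cf_def a1_def a2_def c1_def c2_def using b by (simp add: field_simps)
  have h: "a2 \<le> a1" "c1 \<le> c2" "c2 \<le> 1" "a2 \<le> 1"
    unfolding a1_def a2_def c1_def c2_def using assms x by (auto simp: divide_right_mono divide_nonpos_pos)
  have "(a1-a2)*(1-c2)+(c2-c1)*(1-a2) \<ge> 0" using h by simp
  then have "Cd l u b (x+d) * Cf l u b (x+0) - Cf l u b (x+d) * Cd l u b (x+0) \<le> 0"
  proof -
    have "(a2-c2)*(2-a1-c1) - (2-a2-c2)*(a1-c1) \<le> 0" 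
    proof -
      have gen: "\<And>S::real. 0 \<le> S \<Longrightarrow> -2*S \<le> 0" by simp
      show ?thesis by (subst alg1) (rule gen, fact)
    qed
    then show ?thesis unfolding e using b by (simp add: divide_nonpos_pos)
  qed
  then have "(Cd l u b (x+d) * Cf l u b (x+0) - Cf l u b (x+d) * Cd l u b (x+0)) / (Cf l u b (x+0) * Cf l u b (x+0)) \<le> 0"
    using pos by (simp add: divide_nonpos_pos)
  with dv show "\<exists>y. DERIV (\<lambda>x. Cf l u b (x+d) / Cf l u b (x+0)) x :> y \<and> y \<le> 0" by blast
qed


lemma ratio_le:
  assumes b: "b>0" and lu: "l<u" and dQ: "0 \<le> dQ" "dQ \<le> u-l"
    and q: "l \<le> q" and q': "q' \<le> u" and qq: "q \<le> q'" "q'-q \<le> dQ"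
  shows "Cf l u b q' * exp ((q'-q)/b) / Cf l u b q \<le> Cf l u b (l+dQ) * exp (dQ/b) / Cf l u b l"
proof -
  define d where "d = q'-q"
  have d0: "0 \<le> d" using qq d_def by simp
  have s1: "Cf l u b (q+d)/Cf l u b (q+0) \<le> Cf l u b (l+d)/Cf l u b (l+0)"
    by (rule F_mono) (use b lu d0 q q' d_def in auto)
  have s2: "Cf l u b (l+d) * exp ((l+d)/b) \<le> Cf l u b (l+dQ) * exp ((l+dQ)/b)"
    by (rule Phi1_mono) (use b dQ qq d_def in auto)
  have ex: "\<And>y. exp ((l+y)/b) = exp (l/b) * exp (y/b)" by (simp add: add_divide_distrib exp_add)
  have s2': "Cf l u b (l+d) * exp (d/b) \<le> Cf l u b (l+dQ) * exp (dQ/b)"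
    using s2 unfolding ex by (simp add: mult.commute mult.left_commute)
  have pl: "Cf l u b l > 0" using Cf_pos[of b l u l] b lu by auto
  have "Cf l u b q' * exp ((q'-q)/b) / Cf l u b q = (Cf l u b (q+d)/Cf l u b (q+0)) * exp (d/b)"
    unfolding d_def by simp
  also have "\<dots> \<le> (Cf l u b (l+d)/Cf l u b (l+0)) * exp (d/b)"
    by (rule mult_right_mono[OF s1]) simp
  also have "\<dots> = Cf l u b (l+d) * exp (d/b) / Cf l u b l" by simp
  also have "\<dots> \<le> Cf l u b (l+dQ) * exp (dQ/b) / Cf l u b l"
    by (rule divide_right_mono[OF s2']) (use pl in simp)
  finally show ?thesis .
qed

lemma ratio_abs:
  assumes b: "b>0" and lu: "l<u" and dQ: "0 \<le> dQ" "dQ \<le> u-l"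
    and q: "q \<in> {l..u}" and q': "q' \<in> {l..u}" and qq: "\<bar>q-q'\<bar> \<le> dQ"
  shows "Cf l u b q' * exp (\<bar>q-q'\<bar>/b) / Cf l u b q \<le> Cf l u b (l+dQ) * exp (dQ/b) / Cf l u b l"
proof (cases "q \<le> q'")
  case True
  then show ?thesis using ratio_le[of b l u dQ q q'] assms by auto
next
  case False
  have "Cf l u b (l+u-q') * exp ((l+u-q' - (l+u-q))/b) / Cf l u b (l+u-q) \<le> Cf l u b (l+dQ) * exp (dQ/b) / Cf l u b l"
    by (rule ratio_le) (use assms False in auto)
  then show ?thesis unfolding Cf_sym using False by simp
qed

lemma dens_meas[measurable]: "bl_density l u b q \<in> borel_measurable borel"
  unfolding bl_density_def by measurable

lemma total_mass:
  assumes b: "b>0" and lu: "l<u" and q: "q \<in> {l..u}"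
  shows "emeasure (bl_laplace l u b q) UNIV = 1"
proof -
  let ?f = "\<lambda>x. 1/(2*b) * exp (- \<bar>x-q\<bar>/b)"
  have C: "C_bl l u b q = Cf l u b q" using C_closed[of b l q u] b q unfolding Cf_def by auto
  have pos: "Cf l u b q > 0" using Cf_pos[of b l u q] b lu q by auto
  have cont: "\<And>x. isCont ?f x" using b by (auto intro!: continuous_intros)
  have int: "integrable lborel (\<lambda>x. ?f x * indicator {l..u} x)"
    by (rule borel_integrable_atLeastAtMost) (use cont in auto)
  have eqd: "\<And>x. bl_density l u b q x = ?f x * indicator {l..u} x / C_bl l u b q"
    unfolding bl_density_def by (auto simp: indicator_def)
  have I: "integral\<^sup>L lborel (\<lambda>x. ?f x * indicator {l..u} x) = C_bl l u b q"
    unfolding C_bl_def using lu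
    by (simp add: interval_integral_Icc set_lebesgue_integral_def mult.commute)
  have "emeasure (bl_laplace l u b q) UNIV = (\<integral>\<^sup>+x. ennreal (bl_density l u b q x) \<partial>lborel)"
    unfolding bl_laplace_def by (subst emeasure_density) auto
  also have "\<dots> = (\<integral>\<^sup>+x. ennreal (?f x * indicator {l..u} x / C_bl l u b q) \<partial>lborel)"
    unfolding eqd ..
  also have "\<dots> = ennreal (integral\<^sup>L lborel (\<lambda>x. ?f x * indicator {l..u} x / C_bl l u b q))"
  proof (rule nn_integral_eq_integral)
    show "integrable lborel (\<lambda>x. ?f x * indicator {l..u} x / C_bl l u b q)"
      using int by (rule integrable_divide)
    show "AE x in lborel. 0 \<le> ?f x * indicator {l..u} x / C_bl l u b q"
      using pos C b by (intro AE_I2) (simp add: indicator_def)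
  qed
  also have "\<dots> = 1" using I C pos b by (simp add: field_simps)
  finally show ?thesis .
qed

lemma final_arith:
  fixes p p' K e \<delta> :: real
  assumes "p \<le> 1" "p \<le> K * p'" "K \<le> e / (1-\<delta>)" "0 \<le> p'" "0 \<le> \<delta>" "\<delta> < 1" "0 \<le> e"
  shows "p \<le> e * p' + \<delta>"
proof (cases "e * p' \<ge> 1 - \<delta>")
  case True then show ?thesis using assms by linarith
next
  case False
  define x where "x = e * p'"
  have x0: "0 \<le> x" using assms x_def by simp
  have "K * p' \<le> e / (1-\<delta>) * p'" by (rule mult_right_mono) (use assms in auto)
  also have "\<dots> = x / (1-\<delta>)" unfolding x_def by simp
  finally have 1: "p \<le> x / (1-\<delta>)" using assms by linarith
  have h: "x*\<delta> \<le> (1-\<delta>)*\<delta>" by (rule mult_right_mono) (use False x_def assms in auto)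
  have "x \<le> (x+\<delta>)*(1-\<delta>)" using h by (simp add: algebra_simps)
  then have "x / (1-\<delta>) \<le> x + \<delta>" using assms by (simp add: pos_divide_le_eq)
  then show ?thesis using 1 x_def by simp
qed


lemma pointwise:
  assumes b: "b>0" and lu: "l<u" and dQ: "0 \<le> dQ" "dQ \<le> u-l"
    and q: "q \<in> {l..u}" and q': "q' \<in> {l..u}" and qq: "\<bar>q-q'\<bar> \<le> dQ"
  shows "bl_density l u b q x \<le> DeltaC l u dQ b * exp (dQ/b) * bl_density l u b q' x"
proof (cases "x \<in> {l..u}")
  case False
  then have "bl_density l u b q x = 0" "bl_density l u b q' x = 0" by (simp_all only: bl_density_def if_not_P[OF False] if_False)
  then show ?thesis by simp
next
  case True
  have Cq: "C_bl l u b q = Cf l u b q" using C_closed[of b l q u] b q unfolding Cf_def by auto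
  have Cq': "C_bl l u b q' = Cf l u b q'" using C_closed[of b l q' u] b q' unfolding Cf_def by auto
  have Cl: "C_bl l u b l = Cf l u b l" using C_closed[of b l l u] b lu unfolding Cf_def by auto
  have Cd: "C_bl l u b (l+dQ) = Cf l u b (l+dQ)" using C_closed[of b l "l+dQ" u] b dQ unfolding Cf_def by auto
  have pq: "Cf l u b q > 0" using Cf_pos[of b l u q] b lu q by auto
  have pq': "Cf l u b q' > 0" using Cf_pos[of b l u q'] b lu q' by auto
  define K where "K = DeltaC l u dQ b * exp (dQ/b)"
  define R where "R = Cf l u b q' * exp (\<bar>q-q'\<bar>/b) / Cf l u b q"
  have RK: "R \<le> K" unfolding R_def K_def DeltaC_def Cl Cd
    using ratio_abs[OF b lu dQ q q' qq] by simp
  have tri: "- \<bar>x-q\<bar> \<le> - \<bar>x-q'\<bar> + \<bar>q-q'\<bar>" by linarith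
  have e1: "exp (-\<bar>x-q\<bar>/b) \<le> exp (-\<bar>x-q'\<bar>/b) * exp (\<bar>q-q'\<bar>/b)"
  proof -
    have "-\<bar>x-q\<bar>/b \<le> (- \<bar>x-q'\<bar> + \<bar>q-q'\<bar>)/b" by (rule divide_right_mono[OF tri]) (use b in simp)
    then show ?thesis by (simp add: exp_add[symmetric] add_divide_distrib diff_divide_distrib)
  qed
  have "bl_density l u b q x = (1/(2*b)) * exp (-\<bar>x-q\<bar>/b) / Cf l u b q"
    using True Cq by (simp add: bl_density_def)
  also have "\<dots> \<le> (1/(2*b)) * (exp (-\<bar>x-q'\<bar>/b) * exp (\<bar>q-q'\<bar>/b)) / Cf l u b q"
    by (intro divide_right_mono mult_left_mono e1) (use b pq in auto)
  also have "\<dots> = R * bl_density l u b q' x"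
    using True Cq' pq pq' unfolding R_def by (simp add: bl_density_def field_simps)
  also have "\<dots> \<le> K * bl_density l u b q' x"
    by (rule mult_right_mono[OF RK]) (use True pq' b Cq' in \<open>simp add: bl_density_def\<close>)
  finally show ?thesis unfolding K_def .
qed

theorem theorem3p3:
  fixes l u dQ \<epsilon> \<delta> b :: real
  assumes "l < u"
    and "0 < dQ" and "dQ \<le> u - l"
    and "\<epsilon> \<ge> 0" and "0 \<le> \<delta>" and "\<delta> < 1"
    and "b > 0"
    and "\<epsilon> - ln (DeltaC l u dQ b) - ln (1 - \<delta>) > 0"
    and "b \<ge> dQ / (\<epsilon> - ln (DeltaC l u dQ b) - ln (1 - \<delta>))"
  shows "\<forall>A \<in> sets borel. \<forall>q \<in> {l..u}. \<forall>q' \<in> {l..u}. \<bar>q - q'\<bar> \<le> dQ \<longrightarrow>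
           measure (bl_laplace l u b q) A
             \<le> exp \<epsilon> * measure (bl_laplace l u b q') A + \<delta>"
proof (intro ballI impI)
  fix A :: "real set" and q q' assume A: "A \<in> sets borel" and q: "q \<in> {l..u}" and q': "q' \<in> {l..u}" and qq: "\<bar>q - q'\<bar> \<le> dQ"
  note lu = assms(1) and b = assms(7)
  note A[measurable]
  define E where "E = \<epsilon> - ln (DeltaC l u dQ b) - ln (1 - \<delta>)"
  have E0: "E > 0" using assms(8) E_def by simp
  have Cl: "C_bl l u b l = Cf l u b l" using C_closed[of b l l u] b lu unfolding Cf_def by auto
  have Cd: "C_bl l u b (l+dQ) = Cf l u b (l+dQ)" using C_closed[of b l "l+dQ" u] b assms(2,3) unfolding Cf_def by auto
  have DC: "DeltaC l u dQ b > 0" unfolding DeltaC_def Cl Cd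
    using Cf_pos[of b l u l] Cf_pos[of b l u "l+dQ"] b lu assms(2,3) by auto
  have "dQ / E \<le> b" using assms(9) E_def by simp
  then have "dQ \<le> b * E" using E0 by (simp add: pos_divide_le_eq mult.commute)
  then have dQb: "dQ / b \<le> E" using b by (simp add: pos_divide_le_eq mult.commute)
  define K where "K = DeltaC l u dQ b * exp (dQ/b)"
  have K0: "K \<ge> 0" using DC K_def by simp
  have "K = exp (ln (DeltaC l u dQ b) + dQ/b)" using DC K_def by (simp add: exp_add)
  also have "\<dots> \<le> exp (\<epsilon> - ln (1-\<delta>))" using dQb E_def by simp
  also have "\<dots> = exp \<epsilon> / (1-\<delta>)" using assms(6) by (simp add: exp_diff)
  finally have KK: "K \<le> exp \<epsilon> / (1-\<delta>)" .
  have pw: "\<And>x. bl_density l u b q x \<le> K * bl_density l u b q' x"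
    unfolding K_def by (rule pointwise) (use b lu assms(2,3) q q' qq in auto)
  have Al: "A \<in> sets lborel" using A by simp
  have "emeasure (bl_laplace l u b q) A = (\<integral>\<^sup>+x\<in>A. ennreal (bl_density l u b q x) \<partial>lborel)"
    unfolding bl_laplace_def using Al by (subst emeasure_density) auto
  also have "\<dots> \<le> (\<integral>\<^sup>+x\<in>A. ennreal K * ennreal (bl_density l u b q' x) \<partial>lborel)"
  proof (intro nn_integral_mono mult_right_mono)
    fix x
    have "ennreal (bl_density l u b q x) \<le> ennreal (K * bl_density l u b q' x)"
      using pw by (rule ennreal_leI)
    then show "ennreal (bl_density l u b q x) \<le> ennreal K * ennreal (bl_density l u b q' x)"
      using K0 by (simp add: ennreal_mult')
  qed simp
  also have "\<dots> = ennreal K * (\<integral>\<^sup>+x\<in>A. ennreal (bl_density l u b q' x) \<partial>lborel)"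
    by (subst nn_integral_cmult[symmetric]) (auto simp: mult.assoc)
  also have "(\<integral>\<^sup>+x\<in>A. ennreal (bl_density l u b q' x) \<partial>lborel) = emeasure (bl_laplace l u b q') A"
    unfolding bl_laplace_def using Al by (subst emeasure_density) auto
  finally have em: "emeasure (bl_laplace l u b q) A \<le> ennreal K * emeasure (bl_laplace l u b q') A" .
  have fin: "\<And>r. r \<in> {l..u} \<Longrightarrow> emeasure (bl_laplace l u b r) A \<le> 1"
  proof -
    fix r assume r: "r \<in> {l..u}"
    have "emeasure (bl_laplace l u b r) A \<le> emeasure (bl_laplace l u b r) UNIV"
      by (rule emeasure_mono) (auto simp: bl_laplace_def)
    then show "emeasure (bl_laplace l u b r) A \<le> 1" using total_mass[OF b lu r] by simp
  qed
  have m1: "emeasure (bl_laplace l u b q) A = ennreal (measure (bl_laplace l u b q) A)"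
    by (rule emeasure_eq_ennreal_measure) (use fin[OF q] in \<open>auto simp: top_unique\<close>)
  have m2: "emeasure (bl_laplace l u b q') A = ennreal (measure (bl_laplace l u b q') A)"
    by (rule emeasure_eq_ennreal_measure) (use fin[OF q'] in \<open>auto simp: top_unique\<close>)
  have p1: "measure (bl_laplace l u b q) A \<le> 1" using fin[OF q] m1 by simp
  have "ennreal (measure (bl_laplace l u b q) A) \<le> ennreal (K * measure (bl_laplace l u b q') A)"
    using em m1 m2 K0 by (simp add: ennreal_mult)
  then have pK: "measure (bl_laplace l u b q) A \<le> K * measure (bl_laplace l u b q') A"
    using K0 by (simp add: ennreal_le_iff)
  show "measure (bl_laplace l u b q) A \<le> exp \<epsilon> * measure (bl_laplace l u b q') A + \<delta>"
    by (rule final_arith[OF p1 pK KK]) (use assms in auto)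
qed

end
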